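(* In the 3-body problem in ${\bf S}^2$ with masses $m_1,m_2,m_3>0$, fix $z\in(-1,1)$ and $r=(1-z^2)^{1/2}$. There exists $\omega\neq 0$ such that ${\bf q}_i(t)=(r\cos(\omega t+\alpha_i), r\sin(\omega t+\alpha_i), z)$ with $\alpha_1=0,\alpha_2=2\pi/3,\alpha_3=4\pi/3$ is a solution of the equations of motion (i.e. the equilateral triangle in the plane $z=$ constant, given suitable initial velocities, rotates in its own plane as an elliptic relative equilibrium) if and only if $m_1=m_2=m_3$.
   Context: The $n$-body problem in ${\bf S}^2$: bodies of masses $m_1,\dots,m_n>0$ have positions ${\bf q}_i=(x_i,y_i,z_i)\in\mathbb R^3$ on the unit sphere ${\bf S}^2=\{{\bf q}:{\bf q}\cdot{\bf q}=1\}$ ($\cdot$ the Euclidean inner product), and satisfy $$\ddot{\bf q}_i=\sum_{j\ne i}\frac{m_j[{\bf q}_j-({\bf q}_i\cdot{\bf q}_j){\bf q}_i]}{[1-({\bf q}_i\cdot{\bf q}_j)^2]^{3/2}}-(\dot{\bf q}_i\cdot\dot{\bf q}_i){\bf q}_i,\qquad {\bf q}_i\cdot{\bf q}_i=1,\ \ {\bf q}_i\cdot\dot{\bf q}_i=0,$$ $i=1,\dots,n$, defined only for configurations with $({\bf q}_i\cdot{\bf q}_j)^2\ne 1$ for all $i\ne j$. *)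

theory Defs
  imports "HOL-Analysis.Analysis"
begin

definition S2_accel :: "nat \<Rightarrow> (nat \<Rightarrow> real) \<Rightarrow> (nat \<Rightarrow> real^3) \<Rightarrow> (nat \<Rightarrow> real^3) \<Rightarrow> nat \<Rightarrow> real^3" where
  "S2_accel n m x v i =
     (\<Sum>j\<in>{..<n} - {i}. (m j / (1 - (x i \<bullet> x j)\<^sup>2) powr (3/2)) *\<^sub>R (x j - (x i \<bullet> x j) *\<^sub>R x i))
     - (v i \<bullet> v i) *\<^sub>R x i"

definition S2_solution :: "nat \<Rightarrow> (nat \<Rightarrow> real) \<Rightarrow> (nat \<Rightarrow> real \<Rightarrow> real^3) \<Rightarrow> bool" where
  "S2_solution n m q \<longleftrightarrow>
     (\<forall>t. \<forall>i<n.
        (q i has_vector_derivative vector_derivative (q i) (at t)) (at t)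
      \<and> ((\<lambda>s. vector_derivative (q i) (at s)) has_vector_derivative
           S2_accel n m (\<lambda>k. q k t) (\<lambda>k. vector_derivative (q k) (at t)) i) (at t)
      \<and> q i t \<bullet> q i t = 1
      \<and> q i t \<bullet> vector_derivative (q i) (at t) = 0
      \<and> (\<forall>j<n. j \<noteq> i \<longrightarrow> (q i t \<bullet> q j t)\<^sup>2 \<noteq> 1))"

end

theory Submission imports Defs begin

lemma vec3_decomp: "vector [a,b,c] = a *\<^sub>R (vector[1,0,0]::real^3) + b *\<^sub>R vector[0,1,0] + c *\<^sub>R vector[0,0,1]"
  by (simp add: vec_eq_iff forall_3)

lemma inner3: "vector [a,b,c] \<bullet> (vector [d,e,f]::real^3) = a*d+b*e+c*f"
  by (simp add: inner_vec_def sum_3)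

lemma vec3_deriv:
  assumes "(f has_real_derivative f') (at t)" "(g has_real_derivative g') (at t)" "(h has_real_derivative h') (at t)"
  shows "((\<lambda>t. vector [f t, g t, h t] :: real^3) has_vector_derivative vector [f', g', h']) (at t)"
proof -
  have "((\<lambda>t. f t *\<^sub>R (vector[1,0,0]::real^3) + g t *\<^sub>R vector[0,1,0] + h t *\<^sub>R vector[0,0,1]) has_vector_derivative
     f' *\<^sub>R (vector[1,0,0]::real^3) + g' *\<^sub>R vector[0,1,0] + h' *\<^sub>R vector[0,0,1]) (at t)"
    using assms by (auto intro!: derivative_eq_intros simp: has_real_derivative_iff_has_vector_derivative)
  then show ?thesis by (simp only: vec3_decomp[symmetric])
qed

lemma qd: "((\<lambda>t. vector [R* cos(w*t+a), R* sin(w*t+a), z] :: real^3) has_vector_derivative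
   vector[-(R*w* sin(w*t+a)), R*w* cos(w*t+a), 0]) (at t)"
  by (rule vec3_deriv) (auto intro!: derivative_eq_intros)

lemma vd: "((\<lambda>t. vector[-(R*w* sin(w*t+a)), R*w* cos(w*t+a), 0] :: real^3) has_vector_derivative
   vector[-(R*w^2* cos(w*t+a)), -(R*w^2* sin(w*t+a)), 0]) (at t)"
  by (rule vec3_deriv) (auto intro!: derivative_eq_intros simp: power2_eq_square)

lemma s23: "sin (2*pi/3) = sqrt 3/2" "cos (2*pi/3) = -1/2"
proof -
  have e: "2*pi/3 = pi - pi/3" by simp
  have a: "sin (2*pi/3) = sin (pi - pi/3)" "cos (2*pi/3) = cos (pi - pi/3)" using e by metis+
  note b = sin_pi_minus[of "pi/3"] cos_pi_minus[of "pi/3"]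
  show "sin (2*pi/3) = sqrt 3/2" "cos (2*pi/3) = -1/2" using a b sin_60 cos_60 by (simp only:)+
qed

lemma s43: "sin (4*pi/3) = -sqrt 3/2" "cos (4*pi/3) = -1/2"
proof -
  have e: "4*pi/3 = pi/3 + pi" by simp
  have a: "sin (4*pi/3) = sin (pi/3 + pi)" "cos (4*pi/3) = cos (pi/3 + pi)" using e by metis+
  note b = sin_periodic_pi[of "pi/3"] cos_periodic_pi[of "pi/3"]
  show "sin (4*pi/3) = -sqrt 3/2" "cos (4*pi/3) = -1/2" using a b sin_60 cos_60 by (simp only:)+
qed


definition alpha :: "nat \<Rightarrow> real" where "alpha i = 2*pi*real i/3"

definition qf :: "real \<Rightarrow> real \<Rightarrow> real \<Rightarrow> nat \<Rightarrow> real \<Rightarrow> real^3" where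
  "qf R z w i t = vector [R * cos(w*t+alpha i), R * sin(w*t+alpha i), z]"

definition vf :: "real \<Rightarrow> real \<Rightarrow> nat \<Rightarrow> real \<Rightarrow> real^3" where
  "vf R w i t = vector[-(R*w * sin(w*t+alpha i)), R*w * cos(w*t+alpha i), 0]"

lemma alpha_vals: "alpha 0 = 0" "alpha 1 = 2*pi/3" "alpha 2 = 4*pi/3"
  by (simp_all add: alpha_def)

lemma alpha_suc: "alpha (Suc 0) = 2*pi/3" "alpha (Suc (Suc 0)) = 4*pi/3"
  by (simp_all add: alpha_def)

lemma qf_deriv: "(qf R z w i has_vector_derivative vf R w i t) (at t)"
  unfolding qf_def[abs_def] vf_def by (rule qd)

lemma vf_deriv: "(vf R w i has_vector_derivative (-(w^2)) *\<^sub>R (qf R z w i t - vector[0,0,z])) (at t)"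
proof -
  have "(-(w^2)) *\<^sub>R (qf R z w i t - vector[0,0,z]) = vector[-(R*w^2 * cos(w*t+alpha i)), -(R*w^2 * sin(w*t+alpha i)), 0]"
    by (simp add: qf_def vec_eq_iff forall_3)
  then show ?thesis unfolding vf_def[abs_def] by (simp only: vd)
qed

lemma vderiv: "vector_derivative (qf R z w i) (at t) = vf R w i t"
  using qf_deriv vector_derivative_at by blast

lemma qq: "R^2 + z^2 = 1 \<Longrightarrow> qf R z w i t \<bullet> qf R z w i t = 1"
proof -
  assume h: "R^2 + z^2 = 1"
  have "qf R z w i t \<bullet> qf R z w i t = R^2 * ((sin(w*t+alpha i))^2 + (cos(w*t+alpha i))^2) + z^2"
    unfolding qf_def inner3 power2_eq_square by algebra
  then show ?thesis using h by (simp only: sin_cos_squared_add mult_1_right)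
qed

lemma qv: "qf R z w i t \<bullet> vf R w i t = 0"
  unfolding qf_def vf_def inner3 by (simp add: algebra_simps)

lemma vv: "vf R w i t \<bullet> vf R w i t = R^2*w^2"
proof -
  have "vf R w i t \<bullet> vf R w i t = (R*w)^2 * ((sin(w*t+alpha i))^2 + (cos(w*t+alpha i))^2)"
    unfolding vf_def inner3 power2_eq_square by algebra
  then show ?thesis by (simp only: sin_cos_squared_add mult_1_right power_mult_distrib)
qed

lemma cos_third: "d \<in> {1,2,-1,-2} \<Longrightarrow> cos (2*pi*d/3) = -1/2"
proof -
  assume "d \<in> {1,2,-1,-2}"
  then have "cos (2*pi*d/3) = cos (2*pi/3) \<or> cos (2*pi*d/3) = cos (4*pi/3)"
  proof (elim insertE)
    assume "d = -1" then show ?thesis by (metis cos_minus minus_divide_left mult.right_neutral mult_minus_right)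
  next
    assume "d = -2" then have "2*pi*d/3 = -(4*pi/3)" by simp
    then show ?thesis by (metis cos_minus)
  qed auto
  then show ?thesis using s23 s43 by auto
qed

lemma qdot: "i < 3 \<Longrightarrow> j < 3 \<Longrightarrow> i \<noteq> j \<Longrightarrow> qf R z w i t \<bullet> qf R z w j t = z^2 - R^2/2"
proof -
  assume h: "i < 3" "j < 3" "i \<noteq> j"
  have "qf R z w i t \<bullet> qf R z w j t = R^2 * cos ((w*t+alpha i) - (w*t+alpha j)) + z^2"
    unfolding qf_def inner3 cos_diff by (simp add: algebra_simps power2_eq_square)
  also have "(w*t+alpha i) - (w*t+alpha j) = 2*pi*(real i - real j)/3"
    by (simp add: alpha_def field_simps)
  also have "real i - real j \<in> {1,2,-1,-2}" using h by (auto simp: less_Suc_eq numeral_3_eq_3)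
  then have "cos (2*pi*(real i - real j)/3) = -1/2" by (rule cos_third)
  finally show ?thesis by simp
qed


lemma qdotv: "qf R z w i t \<bullet> vector[a,b,d] = R * cos(w*t+alpha i) * a + R * sin(w*t+alpha i) * b + z*d"
  unfolding qf_def inner3 by simp

lemma trig_sum: "cos x + cos (x + 2*pi/3) + cos (x + 4*pi/3) = 0"
  "sin x + sin (x + 2*pi/3) + sin (x + 4*pi/3) = 0"
  unfolding cos_add sin_add s23 s43 by (simp_all add: algebra_simps)

lemma sumq: "(\<Sum>j<3. qf R z w j t) = vector[0,0,3*z]"
proof -
  have "(\<Sum>j<3. qf R z w j t) = qf R z w 0 t + qf R z w 1 t + qf R z w 2 t"
    by (simp add: numeral_3_eq_3 numeral_2_eq_2)
  also have "\<dots> = vector [R * (cos (w*t) + cos (w*t + 2*pi/3) + cos (w*t + 4*pi/3)),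
                           R * (sin (w*t) + sin (w*t + 2*pi/3) + sin (w*t + 4*pi/3)), 3*z]"
    unfolding qf_def alpha_vals by (simp add: vec_eq_iff forall_3 distrib_left)
  also have "\<dots> = vector[0,0,3*z]" unfolding trig_sum by simp
  finally show ?thesis .
qed

lemma accel_gen:
  assumes "i < 3"
  shows "S2_accel 3 m (\<lambda>k. qf R z w k t) (\<lambda>k. vf R w k t) i =
    (\<Sum>j\<in>{..<3}-{i}. (m j / (1 - (z^2 - R^2/2)^2) powr (3/2)) *\<^sub>R (qf R z w j t - (z^2 - R^2/2) *\<^sub>R qf R z w i t))
    - (R^2*w^2) *\<^sub>R qf R z w i t"
  unfolding S2_accel_def vv
  by (intro arg_cong2[where f="(-)"] refl sum.cong) (auto simp: qdot assms)

lemma accel_eq: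
  assumes R: "R^2 + z^2 = 1" and M: "\<forall>j<3. m j = M" and i: "i < 3"
    and w: "w^2 = 3*M/((1 - (z^2 - R^2/2)^2) powr (3/2))"
  shows "S2_accel 3 m (\<lambda>k. qf R z w k t) (\<lambda>k. vf R w k t) i = (-(w^2)) *\<^sub>R (qf R z w i t - vector[0,0,z])"
proof -
  define c where "c = z^2 - R^2/2"
  define P where "P = (1 - c^2) powr (3/2)"
  define x where "x = qf R z w i t"
  define e0 :: "real^3" where "e0 = vector[0,0,z]"
  have fin: "finite ({..<3::nat})" by simp
  have sumd: "(\<Sum>j\<in>{..<3}-{i}. qf R z w j t) = 3 *\<^sub>R e0 - x"
  proof -
    have "(\<Sum>j<3. qf R z w j t) = x + (\<Sum>j\<in>{..<3}-{i}. qf R z w j t)"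
      unfolding x_def using i by (intro sum.remove) auto
    then show ?thesis using sumq[of R z w t] by (simp add: e0_def vec_eq_iff forall_3)
  qed
  have card: "card ({..<3::nat}-{i}) = 2" using i by simp
  have "S2_accel 3 m (\<lambda>k. qf R z w k t) (\<lambda>k. vf R w k t) i =
    (\<Sum>j\<in>{..<3}-{i}. (M / P) *\<^sub>R (qf R z w j t - c *\<^sub>R x)) - (R^2*w^2) *\<^sub>R x"
    unfolding accel_gen[OF i] c_def[symmetric] P_def[symmetric] x_def[symmetric]
    using M by (intro arg_cong2[where f="(-)"] refl sum.cong) auto
  also have "\<dots> = (M/P) *\<^sub>R (3 *\<^sub>R e0 - x - (2*c) *\<^sub>R x) - (R^2*w^2) *\<^sub>R x"
  proof -
    have s2: "c *\<^sub>R (\<Sum>j\<in>{..<3}-{i}. x) = (2*c) *\<^sub>R x"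
      by (simp only: sum_constant_scaleR card scaleR_scaleR) simp
    show ?thesis by (simp only: scaleR_sum_right[symmetric] sum_subtractf sumd s2)
  qed
  also have "\<dots> = (3*(M/P)) *\<^sub>R e0 - ((M/P)*(1+2*c) + R^2*w^2) *\<^sub>R x"
    by (simp add: algebra_simps)
  also have "(M/P)*(1+2*c) + R^2*w^2 = w^2"
  proof -
    have "1 + 2*c + 3*R^2 = 3" using R unfolding c_def by simp
    have wP: "w^2 = 3*M/P" using w unfolding P_def c_def by simp
    have "(M/P)*(1+2*c) + R^2*w^2 = (M/P)*(1+2*c+3*R^2)"
      unfolding wP by (simp add: algebra_simps)
    also have "\<dots> = w^2" using wP \<open>1 + 2*c + 3*R^2 = 3\<close> by simp
    finally show ?thesis .
  qed
  also have "3*(M/P) = w^2" using w unfolding P_def c_def by simp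
  finally show ?thesis unfolding x_def[symmetric] e0_def[symmetric] by (simp add: algebra_simps)
qed


lemma c_bound: fixes R z :: real assumes "R^2 + z^2 = 1" "z^2 < 1" shows "(z^2 - R^2/2)^2 < 1"
proof -
  have "z^2 - R^2/2 = (3*z^2 - 1)/2" using assms(1) by (simp add: field_simps)
  moreover have "\<bar>(3*z^2 - 1)/2\<bar> < (1::real)" 
    using assms(2) zero_le_power2[of z] unfolding abs_less_iff by (simp add: field_simps) (use zero_le_power2[of z] in linarith)
  ultimately show ?thesis by (simp add: abs_square_less_1)
qed

lemma sol_equal:
  assumes R: "R^2 + z^2 = 1" "z^2 < 1" and M: "\<forall>j<3. m j = M"
    and w: "w^2 = 3*M/((1 - (z^2 - R^2/2)^2) powr (3/2))"
  shows "S2_solution 3 m (qf R z w)"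
proof -
  have vfun: "\<And>i. (\<lambda>s. vector_derivative (qf R z w i) (at s)) = vf R w i" by (rule ext) (rule vderiv)
  have cb: "(z^2 - R^2/2)^2 \<noteq> 1" using c_bound[OF R] by simp
  show ?thesis unfolding S2_solution_def vderiv vfun
  proof (intro allI impI conjI)
    fix t i assume i: "i < (3::nat)"
    show "(qf R z w i has_vector_derivative vf R w i t) (at t)" by (rule qf_deriv)
    show "(vf R w i has_vector_derivative S2_accel 3 m (\<lambda>k. qf R z w k t) (\<lambda>k. vf R w k t) i) (at t)"
      unfolding accel_eq[OF R(1) M i w] by (rule vf_deriv)
    show "qf R z w i t \<bullet> qf R z w i t = 1" by (rule qq[OF R(1)])
    show "qf R z w i t \<bullet> vf R w i t = 0" by (rule qv)
    fix j assume "j < (3::nat)" "j \<noteq> i"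
    then show "(qf R z w i t \<bullet> qf R z w j t)\<^sup>2 \<noteq> 1" using qdot[OF i] cb by simp
  qed
qed

theorem mainTheorem9:
  fixes m :: "nat \<Rightarrow> real" and z :: real
  assumes "m 0 > 0" and "m 1 > 0" and "m 2 > 0"
    and "-1 < z" and "z < 1"
  shows "(\<exists>\<omega>::real. \<omega> \<noteq> 0 \<and>
           S2_solution 3 m (\<lambda>i t. vector [sqrt (1 - z\<^sup>2) * cos (\<omega> * t + 2 * pi * real i / 3),
                                          sqrt (1 - z\<^sup>2) * sin (\<omega> * t + 2 * pi * real i / 3),
                                          z]))
         \<longleftrightarrow> (m 0 = m 1 \<and> m 1 = m 2)"
proof -
  define R where "R = sqrt (1 - z^2)"
  have z2: "z^2 < 1" using assms(4,5) by (simp add: abs_square_less_1 abs_less_iff)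
  have R2: "R^2 + z^2 = 1" unfolding R_def using z2 by simp
  have Rpos: "R > 0" unfolding R_def using z2 by simp
  define c where "c = z^2 - R^2/2"
  define P where "P = (1 - c^2) powr (3/2)"
  have Ppos: "P > 0" unfolding P_def c_def using c_bound[OF R2 z2] by simp
  have L: "\<And>\<omega>. (\<lambda>i t. vector [sqrt (1 - z\<^sup>2) * cos (\<omega> * t + 2 * pi * real i / 3),
                                          sqrt (1 - z\<^sup>2) * sin (\<omega> * t + 2 * pi * real i / 3),
                                          z]) = qf R z \<omega>"
    by (simp add: fun_eq_iff qf_def alpha_def R_def)
  show ?thesis unfolding L
  proof
    assume "\<exists>\<omega>. \<omega> \<noteq> 0 \<and> S2_solution 3 m (qf R z \<omega>)"
    then obtain w where w0: "w \<noteq> 0" and sol: "S2_solution 3 m (qf R z w)" by blast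
    have vfun: "\<And>i. (\<lambda>s. vector_derivative (qf R z w i) (at s)) = vf R w i" by (rule ext) (rule vderiv)
    have eq: "S2_accel 3 m (\<lambda>k. qf R z w k 0) (\<lambda>k. vf R w k 0) i = (-(w^2)) *\<^sub>R (qf R z w i 0 - vector[0,0,z])"
      if "i < 3" for i
    proof -
      have "(vf R w i has_vector_derivative S2_accel 3 m (\<lambda>k. qf R z w k 0) (\<lambda>k. vf R w k 0) i) (at 0)"
        using sol that unfolding S2_solution_def vderiv vfun by blast
      then show ?thesis using vf_deriv vector_derivative_unique_at by blast
    qed
    have E0: "(m 1 / P) *\<^sub>R (qf R z w 1 0 - c *\<^sub>R qf R z w 0 0) + (m 2 / P) *\<^sub>R (qf R z w 2 0 - c *\<^sub>R qf R z w 0 0)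
        - (R^2*w^2) *\<^sub>R qf R z w 0 0 = (-(w^2)) *\<^sub>R (qf R z w 0 0 - vector[0,0,z])"
    proof -
      have s: "{..<3::nat} - {0} = {1,2}" by auto
      have "S2_accel 3 m (\<lambda>k. qf R z w k 0) (\<lambda>k. vf R w k 0) 0 = (m 1 / P) *\<^sub>R (qf R z w 1 0 - c *\<^sub>R qf R z w 0 0) + (m 2 / P) *\<^sub>R (qf R z w 2 0 - c *\<^sub>R qf R z w 0 0)
        - (R^2*w^2) *\<^sub>R qf R z w 0 0"
        unfolding accel_gen[of 0, OF zero_less_numeral] s c_def[symmetric] P_def[symmetric] by simp
      then show ?thesis using eq[of 0] by simp
    qed
    have E1: "(m 0 / P) *\<^sub>R (qf R z w 0 0 - c *\<^sub>R qf R z w 1 0) + (m 2 / P) *\<^sub>R (qf R z w 2 0 - c *\<^sub>R qf R z w 1 0)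
        - (R^2*w^2) *\<^sub>R qf R z w 1 0 = (-(w^2)) *\<^sub>R (qf R z w 1 0 - vector[0,0,z])"
    proof -
      have s: "{..<3::nat} - {1} = {0,2}" by auto
      have i1: "(1::nat) < 3" by simp
      have "S2_accel 3 m (\<lambda>k. qf R z w k 0) (\<lambda>k. vf R w k 0) 1 = (m 0 / P) *\<^sub>R (qf R z w 0 0 - c *\<^sub>R qf R z w 1 0) + (m 2 / P) *\<^sub>R (qf R z w 2 0 - c *\<^sub>R qf R z w 1 0)
        - (R^2*w^2) *\<^sub>R qf R z w 1 0"
        unfolding accel_gen[OF i1] s c_def[symmetric] P_def[symmetric] by simp
      then show ?thesis using eq[of 1] by simp
    qed
    have F0: "(m 1 / P) * (R * (sqrt 3/2)) + (m 2 / P) * (R * (-sqrt 3/2)) = 0"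
      using arg_cong[OF E0, of "\<lambda>v. v \<bullet> vector[0,1,0]"]
      by (simp add: inner_diff_left inner_add_left qdotv alpha_vals alpha_suc s23 s43 inner3)
    have F1: "(m 0 / P) * (R * (-sqrt 3/2)) + (m 2 / P) * (R * (sqrt 3/2)) = 0"
      using arg_cong[OF E1, of "\<lambda>v. v \<bullet> vector[-sqrt 3/2,-1/2,0]"]
      by (simp add: inner_diff_left inner_add_left qdotv alpha_vals alpha_suc s23 s43 inner3; simp add: algebra_simps)
    have k: "R * sqrt 3 / (2*P) \<noteq> 0" using Rpos Ppos by simp
    have a: "m 1 = m 2" using F0 Rpos Ppos by (auto simp: field_simps)
    have b: "m 0 = m 2" using F1 Rpos Ppos by (auto simp: field_simps)
    show "m 0 = m 1 \<and> m 1 = m 2" using a b by simp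
  next
    assume h: "m 0 = m 1 \<and> m 1 = m 2"
    define M where "M = m 0"
    have M: "\<forall>j<3. m j = M" using h by (auto simp: M_def less_Suc_eq numeral_3_eq_3 numeral_2_eq_2)
    define w where "w = sqrt (3*M/P)"
    have "3*M/P > 0" using assms(1) Ppos by (simp add: M_def)
    then have wpos: "w > 0" and w2: "w^2 = 3*M/P" unfolding w_def by simp_all
    have "S2_solution 3 m (qf R z w)"
      by (rule sol_equal[OF R2 z2 M]) (use w2 in \<open>simp add: P_def c_def\<close>)
    then show "\<exists>\<omega>. \<omega> \<noteq> 0 \<and> S2_solution 3 m (qf R z \<omega>)" using wpos by (intro exI[of _ w]) simp
  qed
qed

end
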